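(* Assume the setting below. Define $\beta_{TDMA}(x,L)=C\max\{\lfloor x/p\rfloor L,\ x-\lceil x/p\rceil(p-L)\}$ and $$\beta_{ST}(t)=\min_{0\le i\le N-1}\ \sum_{j=i}^{i+N-1}\beta_{TDMA}\big(t+p-L_j-g_i-o_{j,i},\ L_j\big),\qquad t\ge0,$$ where $g_i=o_i-(o_{i-1}+L_{i-1})$ is the idle time between the closing of the preceding ST window and the opening of window $i$. Then for all $s\in\mathbb R$ and $\Delta t\ge 0$, $C\cdot\Delta t_{ST}(s,s+\Delta t)\ge\beta_{ST}(\Delta t)$; i.e. $\beta_{ST}$ is a strict service curve for ST traffic at the port (non-preemption mode).
   Context: Fix an output port with physical link rate $C>0$. Its gate control list (GCL) is periodic with period $p>0$ and contains $N\ge 1$ scheduled-traffic (ST) windows per period. Window $k\in\{0,\dots,N-1\}$ is the interval $[o_k,o_k+L_k)$, where $0\le o_0<o_1<\dots<o_{N-1}<p$, $L_k\ge 0$, $o_k+L_k\le o_{k+1}$ for $k<N-1$ and $o_{N-1}+L_{N-1}\le o_0+p$. Indices are extended to all integers periodically: $o_{k+N}=o_k+p$, $L_{k+N}=L_k$. Relative offsets are $o_{j,i}=o_j-o_i$. Let $S=\bigcup_{k\in\mathbb Z}[o_k,o_k+L_k)$ and for $s\le t$ let $\Delta t_{ST}(s,t)$ be the Lebesgue measure of $S\cap[s,t]$. *)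

theory Defs
  imports "HOL-Analysis.Analysis"
begin

text \<open>A GCL with N windows per period p is given by offsets off k and lengths len k
  for k < N; these are extended periodically to all integer indices.\<close>

definition ext_off :: "real \<Rightarrow> nat \<Rightarrow> (nat \<Rightarrow> real) \<Rightarrow> int \<Rightarrow> real" where
  "ext_off p N off k = off (nat (k mod int N)) + p * of_int (k div int N)"

definition ext_len :: "nat \<Rightarrow> (nat \<Rightarrow> real) \<Rightarrow> int \<Rightarrow> real" where
  "ext_len N len k = len (nat (k mod int N))"

definition st_set :: "real \<Rightarrow> nat \<Rightarrow> (nat \<Rightarrow> real) \<Rightarrow> (nat \<Rightarrow> real) \<Rightarrow> real set" where
  "st_set p N off len =
     (\<Union>k::int. {ext_off p N off k ..< ext_off p N off k + ext_len N len k})"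

definition delta_st :: "real \<Rightarrow> nat \<Rightarrow> (nat \<Rightarrow> real) \<Rightarrow> (nat \<Rightarrow> real) \<Rightarrow> real \<Rightarrow> real \<Rightarrow> real" where
  "delta_st p N off len s t = measure lborel (st_set p N off len \<inter> {s..t})"

definition beta_tdma :: "real \<Rightarrow> real \<Rightarrow> real \<Rightarrow> real \<Rightarrow> real" where
  "beta_tdma C p x L =
     C * max (of_int \<lfloor>x / p\<rfloor> * L) (x - of_int \<lceil>x / p\<rceil> * (p - L))"

definition gap :: "real \<Rightarrow> nat \<Rightarrow> (nat \<Rightarrow> real) \<Rightarrow> (nat \<Rightarrow> real) \<Rightarrow> int \<Rightarrow> real" where
  "gap p N off len i =
     ext_off p N off i - (ext_off p N off (i - 1) + ext_len N len (i - 1))"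

definition beta_st :: "real \<Rightarrow> real \<Rightarrow> nat \<Rightarrow> (nat \<Rightarrow> real) \<Rightarrow> (nat \<Rightarrow> real) \<Rightarrow> real \<Rightarrow> real" where
  "beta_st C p N off len t =
     Min ((\<lambda>i::int. \<Sum>j\<in>{i..i + int N - 1}.
             beta_tdma C p
               (t + p - ext_len N len j - gap p N off len i
                  - (ext_off p N off j - ext_off p N off i))
               (ext_len N len j)) ` {0..<int N})"

end

theory Submission
  imports Defs
begin

locale gcl =
  fixes C p :: real and N :: nat and off len :: "nat \<Rightarrow> real"
  assumes C: "C > 0" and p: "p > 0" and N: "N \<ge> 1"
    and off0: "0 \<le> off 0"
    and offmono: "\<And>k. Suc k < N \<Longrightarrow> off k < off (Suc k)"
    and offlast: "off (N - 1) < p"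
    and lenpos: "\<And>k. k < N \<Longrightarrow> len k \<ge> 0"
    and disj: "\<And>k. Suc k < N \<Longrightarrow> off k + len k \<le> off (Suc k)"
    and disjlast: "off (N - 1) + len (N - 1) \<le> off 0 + p"
begin

abbreviation "Ox \<equiv> ext_off p N off"
abbreviation "Lx \<equiv> ext_len N len"

lemma O_shift: "Ox (m + q * int N) = Ox m + of_int q * p"
  using N by (simp add: ext_off_def algebra_simps)

lemma L_shift: "Lx (m + q * int N) = Lx m"
  using N by (simp add: ext_len_def)

lemma L_nonneg: "Lx m \<ge> 0"
  using N by (simp add: ext_len_def lenpos nat_less_iff)

lemma step: "Ox m + Lx m \<le> Ox (m + 1)"
proof -
  define r where "r = m mod int N"
  define q where "q = m div int N"
  have m: "m = r + q * int N" unfolding r_def q_def by simp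
  have r: "0 \<le> r" "r < int N" using N unfolding r_def by auto
  show ?thesis
  proof (cases "r + 1 < int N")
    case True
    have "Ox m + Lx m = off (nat r) + len (nat r) + of_int q * p"
      using O_shift[of r q] L_shift[of r q] r m unfolding ext_off_def ext_len_def by simp
    moreover have "Ox (m+1) = off (Suc (nat r)) + of_int q * p"
      using O_shift[of "r+1" q] r m True unfolding ext_off_def
      by (simp add: algebra_simps Suc_nat_eq_nat_zadd1)
    moreover have "off (nat r) + len (nat r) \<le> off (Suc (nat r))"
      using disj[of "nat r"] True r by linarith
    ultimately show ?thesis by simp
  next
    case False
    hence rN: "r = int N - 1" using r by simp
    have rm: "r mod int N = r" "r div int N = 0" using r by auto
    have nr: "nat r = N - 1" using rN N by simp
    have "Ox m + Lx m = off (N - 1) + len (N - 1) + of_int q * p"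
      using O_shift[of r q] L_shift[of r q] m unfolding ext_off_def ext_len_def rm nr
      by simp
    moreover have "Ox (m+1) = off 0 + of_int (q+1) * p"
      using O_shift[of 0 "q+1"] m rN unfolding ext_off_def
      by (simp add: algebra_simps)
    ultimately show ?thesis using disjlast by (simp add: algebra_simps)
  qed
qed

lemma O_le_step: "Ox m \<le> Ox (m + 1)"
  using step[of m] L_nonneg[of m] by linarith

lemma O_mono: "m \<le> m' \<Longrightarrow> Ox m \<le> Ox m'"
proof (induction m' rule: int_ge_induct)
  case base then show ?case by simp
next
  case (step i) then show ?case using O_le_step[of i] by linarith
qed

lemma O_end_le: "m < m' \<Longrightarrow> Ox m + Lx m \<le> Ox m'"
  using step[of m] O_mono[of "m+1" m'] by linarith


abbreviation "S \<equiv> st_set p N off len"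
abbreviation "W m \<equiv> {Ox m ..< Ox m + Lx m}"

lemma S_def': "S = (\<Union>k. W k)" by (simp add: st_set_def)

lemma S_sets[measurable]: "S \<in> sets lborel" unfolding S_def' by auto

lemma Icc_fm: "{a..b::real} \<in> fmeasurable lborel"
  by (cases "a \<le> b") (auto simp: fmeasurable_def)

lemma SI_fm: "S \<inter> {a..b} \<in> fmeasurable lborel"
  using fmeasurable_Int_fmeasurable[OF Icc_fm S_sets] by (simp add: Int_commute)

lemma mu_le_len: "t \<ge> 0 \<Longrightarrow> measure lborel (S \<inter> {a..a+t}) \<le> t"
proof -
  assume t: "t \<ge> 0"
  have "measure lborel (S \<inter> {a..a+t}) \<le> measure lborel {a..a+t}"
    by (rule measure_mono_fmeasurable) (auto intro: Icc_fm)
  also have "\<dots> = t" using t by simp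
  finally show ?thesis .
qed

lemma gap_empty: "S \<inter> {Ox (i-1) + Lx (i-1) ..< Ox i} = {}"
proof (rule ccontr)
  assume "S \<inter> {Ox (i-1) + Lx (i-1) ..< Ox i} \<noteq> {}"
  then obtain x where x0: "x \<in> S" "Ox (i-1) + Lx (i-1) \<le> x" "x < Ox i"
    by auto
  then obtain k where "x \<in> W k" unfolding S_def' by blast
  with x0 have x: "x \<in> W k" "Ox (i-1) + Lx (i-1) \<le> x" "x < Ox i" by auto
  show False
  proof (cases "k \<le> i - 1")
    case True
    have "Ox k + Lx k \<le> Ox (i-1) + Lx (i-1)"
    proof (cases "k = i - 1")
      case False
      then have "Ox k + Lx k \<le> Ox (i-1)" using O_end_le[of k "i-1"] True by simp
      then show ?thesis using L_nonneg[of "i-1"] by linarith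
    qed simp
    then show False using x by auto
  next
    case False
    then have "Ox i \<le> Ox k" using O_mono[of i k] by simp
    then show False using x by auto
  qed
qed

lemma win_sub: "{Ox (i-1) ..< Ox (i-1) + Lx (i-1)} \<subseteq> S"
  unfolding S_def' by blast

lemma shift_gap:
  assumes "Ox (i-1) + Lx (i-1) \<le> s" "s \<le> Ox i" "t \<ge> 0"
  shows "measure lborel (S \<inter> {Ox (i-1) + Lx (i-1) .. Ox (i-1) + Lx (i-1) + t})
       \<le> measure lborel (S \<inter> {s..s+t})"
proof (rule measure_mono_fmeasurable)
  show "S \<inter> {Ox (i-1) + Lx (i-1) .. Ox (i-1) + Lx (i-1) + t} \<subseteq> S \<inter> {s..s+t}"
  proof
    fix x assume x: "x \<in> S \<inter> {Ox (i-1) + Lx (i-1) .. Ox (i-1) + Lx (i-1) + t}"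
    have "\<not> x < s"
    proof
      assume "x < s"
      then have "x \<in> S \<inter> {Ox (i-1) + Lx (i-1) ..< Ox i}" using x assms by auto
      then show False using gap_empty by blast
    qed
    then show "x \<in> S \<inter> {s..s+t}" using x assms by auto
  qed
qed (auto intro: SI_fm)

lemma shift_win:
  assumes "Ox (i-1) \<le> s" "s \<le> Ox (i-1) + Lx (i-1)" "t \<ge> 0"
  shows "measure lborel (S \<inter> {Ox (i-1) + Lx (i-1) .. Ox (i-1) + Lx (i-1) + t})
       \<le> measure lborel (S \<inter> {s..s+t})"
proof -
  define s0 where "s0 = Ox (i-1) + Lx (i-1)"
  have sub: "{s..<s0} \<subseteq> S" using win_sub[of i] assms unfolding s0_def by fastforce
  have "measure lborel (S \<inter> {s0..s0+t}) \<le> measure lborel (S \<inter> {s..s+t})"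
  proof (cases "t \<le> s0 - s")
    case True
    have "measure lborel (S \<inter> {s0..s0+t}) \<le> t" using mu_le_len assms by simp
    also have "t = measure lborel {s..<s+t}" using assms by simp
    also have "\<dots> \<le> measure lborel (S \<inter> {s..s+t})"
      by (rule measure_mono_fmeasurable) (use sub True in \<open>auto intro: SI_fm\<close>)
    finally show ?thesis .
  next
    case False
    have "measure lborel (S \<inter> {s0..s0+t}) \<le> measure lborel ((S \<inter> {s0..s+t}) \<union> {s+t..s0+t})"
      by (rule measure_mono_fmeasurable) (auto intro!: fmeasurable.Un SI_fm Icc_fm)
    also have "\<dots> \<le> measure lborel (S \<inter> {s0..s+t}) + measure lborel {s+t..s0+t}"
      by (rule measure_Un_le) auto
    also have "measure lborel {s+t..s0+t} = s0 - s" using assms unfolding s0_def by simp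
    also have "measure lborel (S \<inter> {s0..s+t}) + (s0 - s)
       = measure lborel {s..<s0} + measure lborel (S \<inter> {s0..s+t})"
      using assms unfolding s0_def by simp
    also have "\<dots> = measure lborel ({s..<s0} \<union> (S \<inter> {s0..s+t}))"
    proof (rule measure_Union[symmetric])
      have "{s..<s0} \<in> fmeasurable lborel"
        by (rule fmeasurableI2[OF Icc_fm[of s s0]]) auto
      then show "emeasure lborel {s..<s0} \<noteq> \<infinity>" by (auto simp: fmeasurable_def)
      show "emeasure lborel (S \<inter> {s0..s+t}) \<noteq> \<infinity>" using SI_fm[of s0 "s+t"] by (auto simp: fmeasurable_def)
    qed auto
    also have "{s..<s0} \<union> (S \<inter> {s0..s+t}) = S \<inter> {s..s+t}"
      using sub False assms unfolding s0_def by auto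
    finally show ?thesis .
  qed
  then show ?thesis unfolding s0_def .
qed


lemma interval_lb:
  assumes "s0 \<le> a" "0 \<le> (l::real)"
  shows "max 0 (min l (s0+t-a)) \<le> measure lborel ({a..<a+l} \<inter> {s0..s0+t})"
proof (cases "s0 + t \<le> a")
  case True then show ?thesis by simp
next
  case False
  define m where "m = min l (s0+t-a)"
  have m: "0 \<le> m" using False assms unfolding m_def by auto
  have "max 0 (min l (s0+t-a)) = measure lborel {a..<a+m}" using m unfolding m_def by simp
  also have "\<dots> \<le> measure lborel ({a..<a+l} \<inter> {s0..s0+t})"
  proof (rule measure_mono_fmeasurable)
    show "{a..<a+m} \<subseteq> {a..<a+l} \<inter> {s0..s0+t}" using assms m unfolding m_def by auto
    show "{a..<a+l} \<inter> {s0..s0+t} \<in> fmeasurable lborel"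
      using fmeasurable_Int_fmeasurable[OF Icc_fm[of s0 "s0+t"], of "{a..<a+l}"]
      by (auto simp: Int_commute)
  qed auto
  finally show ?thesis .
qed

lemma tdma_arith:
  assumes "0 \<le> x" "0 \<le> l" "l \<le> p"
  shows "beta_tdma C p x l \<le> C * (real (nat \<lfloor>x/p\<rfloor>) * l + max 0 (x - (real (nat \<lfloor>x/p\<rfloor>) + 1) * p + l))"
proof -
  define n where "n = \<lfloor>x/p\<rfloor>"
  have n0: "n \<ge> 0" using assms p unfolding n_def by simp
  have rn: "real (nat n) = of_int n" using n0 by simp
  have le: "of_int n * p \<le> x" "x < (of_int n + 1) * p"
    using floor_divide_lower[OF p, of x] floor_divide_upper[OF p, of x] unfolding n_def
    by auto
  have "max (of_int n * l) (x - of_int \<lceil>x/p\<rceil> * (p - l)) \<le> of_int n * l + max 0 (x - (of_int n + 1) * p + l)"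
  proof (cases "x / p = of_int n")
    case True
    then have "\<lceil>x/p\<rceil> = n" by simp
    moreover have "x = of_int n * p" using True p by (simp add: field_simps)
    ultimately show ?thesis by (simp add: algebra_simps)
  next
    case False
    then have "\<lceil>x/p\<rceil> = n + 1" unfolding n_def
      by (metis ceiling_altdef)
    then show ?thesis by (simp add: algebra_simps)
  qed
  then have "max (of_int n * l) (x - of_int \<lceil>x/p\<rceil> * (p - l)) \<le> real (nat n) * l + max 0 (x - (real (nat n) + 1) * p + l)"
    by (simp only: rn)
  from mult_left_mono[OF this, of C] C show ?thesis unfolding beta_tdma_def n_def[symmetric]
    by simp
qed


lemma per_j:
  assumes t: "t \<ge> 0" and a0: "s0 \<le> Ox j" and ap: "Ox j + Lx j \<le> s0 + p"
  shows "beta_tdma C p (t + p - Lx j - (Ox j - s0)) (Lx j) \<le>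
    C * (\<Sum>k\<le>nat \<lfloor>(t + p - Lx j - (Ox j - s0))/p\<rfloor>. measure lborel (W (j + int k * int N) \<inter> {s0..s0+t}))"
proof -
  define x where "x = t + p - Lx j - (Ox j - s0)"
  define n where "n = nat \<lfloor>x/p\<rfloor>"
  define l where "l = Lx j"
  have l0: "0 \<le> l" using L_nonneg unfolding l_def by simp
  have x0: "0 \<le> x" using t ap unfolding x_def by simp
  have lp: "l \<le> p" using a0 ap unfolding l_def by simp
  have n0: "\<lfloor>x/p\<rfloor> \<ge> 0" using x0 p by simp
  have rn: "real n = of_int \<lfloor>x/p\<rfloor>" using n0 unfolding n_def by simp
  have nx: "real n * p \<le> x" "x < (real n + 1) * p"
    using floor_divide_lower[OF p, of x] floor_divide_upper[OF p, of x] unfolding rn by auto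
  define g where "g k = max 0 (min l (s0 + t - (Ox j + real k * p)))" for k :: nat
  have W_eq: "W (j + int k * int N) = {Ox j + real k * p ..< Ox j + real k * p + l}" for k
    using O_shift[of j "int k"] L_shift[of j "int k"] unfolding l_def by simp
  have meas: "g k \<le> measure lborel (W (j + int k * int N) \<inter> {s0..s0+t})" for k
  proof -
    have "0 \<le> real k * p" using p by simp
    then have "s0 \<le> Ox j + real k * p" using a0 by linarith
    from interval_lb[OF this l0, of t] show ?thesis unfolding W_eq g_def .
  qed
  have gk: "g k = l" if "k < n" for k
  proof -
    have "real k + 1 \<le> real n" using that by simp
    then have "(real k + 1) * p \<le> real n * p" using p by (simp add: mult_right_mono)
    then have "l \<le> s0 + t - (Ox j + real k * p)" using nx unfolding x_def l_def by (simp add: algebra_simps)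
    then show ?thesis unfolding g_def using l0 by simp
  qed
  have gn: "g n = max 0 (x - (real n + 1) * p + l)"
  proof -
    have "s0 + t - (Ox j + real n * p) = x - (real n + 1) * p + l" unfolding x_def l_def by (simp add: algebra_simps)
    moreover have "x - (real n + 1) * p + l \<le> l" using nx by simp
    ultimately show ?thesis unfolding g_def by simp
  qed
  have "(\<Sum>k\<le>n. g k) = (\<Sum>k<n. g k) + g n"
    by (simp add: lessThan_Suc_atMost[symmetric])
  also have "(\<Sum>k<n. g k) = real n * l" using gk by simp
  finally have sg: "(\<Sum>k\<le>n. g k) = real n * l + max 0 (x - (real n + 1) * p + l)" using gn by simp
  have "beta_tdma C p x l \<le> C * (real n * l + max 0 (x - (real n + 1) * p + l))"
    using tdma_arith[OF x0 l0 lp] unfolding n_def .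
  also have "\<dots> = C * (\<Sum>k\<le>n. g k)" using sg by simp
  also have "\<dots> \<le> C * (\<Sum>k\<le>n. measure lborel (W (j + int k * int N) \<inter> {s0..s0+t}))"
    using C by (intro mult_left_mono sum_mono meas) auto
  finally show ?thesis unfolding x_def n_def l_def .
qed


lemma W_disj: "m \<noteq> m' \<Longrightarrow> W m \<inter> W m' = {}"
proof -
  assume "m \<noteq> m'"
  then consider "m < m'" | "m' < m" by linarith
  then show ?thesis
  proof cases
    case 1 then show ?thesis using O_end_le[of m m'] by auto
  next
    case 2 then show ?thesis using O_end_le[of m' m] by auto
  qed
qed

lemma idx_inj:
  assumes "j \<in> {i..i+int N-1}" "j' \<in> {i..i+int N-1}" "j + int k * int N = j' + int k' * int N"
  shows "j = j' \<and> k = k'"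
proof -
  have e: "j - j' = (int k' - int k) * int N" using assms(3) by (simp add: algebra_simps)
  have b: "j - j' < int N" "j' - j < int N" using assms(1,2) by auto
  have "int k' - int k = 0"
  proof (rule ccontr)
    assume ne: "int k' - int k \<noteq> 0"
    then consider "int k' - int k \<ge> 1" | "int k' - int k \<le> -1" by linarith
    then show False
    proof cases
      case 1
      then have "1 * int N \<le> (int k' - int k) * int N" by (intro mult_right_mono) auto
      then show False using e b by linarith
    next
      case 2
      then have "(int k' - int k) * int N \<le> (-1) * int N" by (intro mult_right_mono) auto
      then show False using e b by linarith
    qed
  qed
  then show ?thesis using e by simp
qed

lemma lower:
  assumes t: "t \<ge> 0"
  shows "(\<Sum>j\<in>{i..i+int N-1}. beta_tdma C p (t + p - Lx j - gap p N off len i - (Ox j - Ox i)) (Lx j))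
     \<le> C * measure lborel (S \<inter> {Ox (i-1) + Lx (i-1) .. Ox (i-1) + Lx (i-1) + t})"
proof -
  define s0 where "s0 = Ox (i-1) + Lx (i-1)"
  define J where "J = {i..i+int N-1}"
  define x where "x j = t + p - Lx j - (Ox j - s0)" for j
  define nn where "nn j = nat \<lfloor>x j/p\<rfloor>" for j
  define A where "A jk = W (fst jk + int (snd jk) * int N) \<inter> {s0..s0+t}" for jk :: "int \<times> nat"
  define M where "M = Sigma J (\<lambda>j. {..nn j})"
  have s0i: "s0 \<le> Ox i" using step[of "i-1"] unfolding s0_def by simp
  have s0p: "s0 + p = Ox (i - 1 + 1 * int N) + Lx (i - 1 + 1 * int N)"
    using O_shift[of "i-1" 1] L_shift[of "i-1" 1] unfolding s0_def by simp
  have arg: "t + p - Lx j - gap p N off len i - (Ox j - Ox i) = x j" for j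
    unfolding x_def gap_def s0_def by simp
  have bj: "beta_tdma C p (x j) (Lx j) \<le> C * (\<Sum>k\<le>nn j. measure lborel (A (j, k)))" if j: "j \<in> J" for j
  proof -
    have a0: "s0 \<le> Ox j" using s0i O_mono[of i j] j unfolding J_def by auto
    have ap: "Ox j + Lx j \<le> s0 + p"
    proof (cases "j = i - 1 + 1 * int N")
      case True then show ?thesis using s0p by simp
    next
      case False
      then have "j < i - 1 + 1 * int N" using j unfolding J_def by auto
      then show ?thesis using O_end_le[of j "i - 1 + 1 * int N"] s0p L_nonneg[of "i - 1 + 1 * int N"] by linarith
    qed
    show ?thesis using per_j[OF t a0 ap] unfolding x_def nn_def A_def by simp
  qed
  have "(\<Sum>j\<in>J. beta_tdma C p (t + p - Lx j - gap p N off len i - (Ox j - Ox i)) (Lx j))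
      = (\<Sum>j\<in>J. beta_tdma C p (x j) (Lx j))" using arg by simp
  also have "\<dots> \<le> (\<Sum>j\<in>J. C * (\<Sum>k\<le>nn j. measure lborel (A (j, k))))"
    by (intro sum_mono bj)
  also have "\<dots> = C * (\<Sum>jk\<in>M. measure lborel (A jk))"
    unfolding M_def sum_distrib_left by (subst sum.Sigma) (auto simp: J_def split_def)
  also have "(\<Sum>jk\<in>M. measure lborel (A jk)) = measure lborel (\<Union> (A ` M))"
  proof (rule measure_finite_Union[symmetric])
    show "finite M" unfolding M_def J_def by auto
    show "A ` M \<subseteq> sets lborel" unfolding A_def by auto
    show "disjoint_family_on A M"
      unfolding disjoint_family_on_def
    proof (intro ballI impI)
      fix a b assume ab: "a \<in> M" "b \<in> M" "a \<noteq> b"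
      obtain j k where a: "a = (j, k)" by fastforce
      obtain j' k' where b: "b = (j', k')" by fastforce
      have "j + int k * int N \<noteq> j' + int k' * int N"
        using idx_inj[of j i j' k k'] ab a b unfolding M_def J_def by auto
      from W_disj[OF this] show "A a \<inter> A b = {}" unfolding A_def a b by auto
    qed
    show "emeasure lborel (A i) \<noteq> \<infinity>" for i
    proof -
      have "A i \<in> fmeasurable lborel" unfolding A_def
        by (rule fmeasurableI2[OF Icc_fm[of s0 "s0+t"]]) auto
      then show ?thesis by (auto simp: fmeasurable_def)
    qed
  qed
  also have "measure lborel (\<Union> (A ` M)) \<le> measure lborel (S \<inter> {s0..s0+t})"
  proof (rule measure_mono_fmeasurable)
    show "\<Union> (A ` M) \<subseteq> S \<inter> {s0..s0+t}" unfolding A_def S_def' by blast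
  qed (auto simp: A_def intro: SI_fm)
  finally show ?thesis using C unfolding J_def s0_def by (simp add: mult_left_mono)
qed


lemma exists_idx: "\<exists>i. Ox (i-1) \<le> s \<and> s < Ox i"
proof -
  define q where "q = \<lfloor>(s - off 0)/p\<rfloor>"
  have Ox0: "Ox 0 = off 0" unfolding ext_off_def by simp
  have lo: "Ox (q * int N) \<le> s" and hi: "s < Ox (int N + q * int N)"
  proof -
    have "of_int q * p \<le> s - off 0" "s - off 0 < (of_int q + 1) * p"
      using floor_divide_lower[OF p, of "s - off 0"] floor_divide_upper[OF p, of "s - off 0"]
      unfolding q_def by auto
    moreover have "Ox (q * int N) = off 0 + of_int q * p" using O_shift[of 0 q] Ox0 by simp
    moreover have "Ox (int N + q * int N) = off 0 + (of_int q + 1) * p"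
      using O_shift[of 0 "q+1"] Ox0 by (simp add: algebra_simps)
    ultimately show "Ox (q * int N) \<le> s" "s < Ox (int N + q * int N)" by (auto simp: algebra_simps)
  qed
  define P where "P k = (s < Ox (q * int N + int k))" for k :: nat
  have PN: "P N" using hi unfolding P_def by (simp add: add.commute)
  define k0 where "k0 = (LEAST k. P k)"
  have Pk0: "P k0" unfolding k0_def using PN by (rule LeastI)
  have k0: "k0 \<noteq> 0"
  proof
    assume "k0 = 0"
    then show False using Pk0 lo unfolding P_def by simp
  qed
  have "\<not> P (k0 - 1)" using k0 unfolding k0_def
    by (metis Least_le diff_less k0_def less_numeral_extra(1) not_gr0 not_le)
  then have "Ox (q * int N + int k0 - 1) \<le> s" unfolding P_def using k0 by (simp add: of_nat_diff add_diff_eq)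
  then show ?thesis using Pk0 unfolding P_def by (intro exI[of _ "q * int N + int k0"]) simp
qed

definition hsum :: "real \<Rightarrow> int \<Rightarrow> real" where
  "hsum t i = (\<Sum>j\<in>{i..i+int N-1}. beta_tdma C p (t + p - Lx j - gap p N off len i - (Ox j - Ox i)) (Lx j))"

lemma hsum_period: "hsum t (r + q * int N) = hsum t r"
proof -
  have gp: "gap p N off len (r + q * int N) = gap p N off len r"
    unfolding gap_def using O_shift[of r q] O_shift[of "r-1" q] L_shift[of "r-1" q]
    by (simp add: algebra_simps)
  have "hsum t (r + q * int N) = (\<Sum>j\<in>(\<lambda>j. j + q * int N) ` {r..r+int N-1}.
     beta_tdma C p (t + p - Lx j - gap p N off len (r + q * int N) - (Ox j - Ox (r + q * int N))) (Lx j))"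
    unfolding hsum_def by (simp add: algebra_simps)
  also have "\<dots> = (\<Sum>j\<in>{r..r+int N-1}.
     beta_tdma C p (t + p - Lx (j + q * int N) - gap p N off len (r + q * int N) - (Ox (j + q * int N) - Ox (r + q * int N))) (Lx (j + q * int N)))"
    by (subst sum.reindex) (auto simp: inj_on_def)
  also have "\<dots> = hsum t r"
    unfolding hsum_def gp O_shift L_shift by simp
  finally show ?thesis .
qed

lemma main: "\<Delta>t \<ge> 0 \<Longrightarrow> C * delta_st p N off len s (s + \<Delta>t) \<ge> beta_st C p N off len \<Delta>t"
proof -
  assume t: "\<Delta>t \<ge> 0"
  obtain i where i: "Ox (i-1) \<le> s" "s < Ox i" using exists_idx by blast
  define s0 where "s0 = Ox (i-1) + Lx (i-1)"
  have sh: "measure lborel (S \<inter> {s0..s0+\<Delta>t}) \<le> measure lborel (S \<inter> {s..s+\<Delta>t})"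
  proof (cases "s \<le> s0")
    case True then show ?thesis using shift_win[of i s \<Delta>t] i t unfolding s0_def by simp
  next
    case False then show ?thesis using shift_gap[of i s \<Delta>t] i t unfolding s0_def by simp
  qed
  define r where "r = i mod int N"
  have ir: "i = r + (i div int N) * int N" unfolding r_def by simp
  have r: "r \<in> {0..<int N}" using N unfolding r_def by simp
  have "beta_st C p N off len \<Delta>t \<le> hsum \<Delta>t r"
    unfolding beta_st_def hsum_def by (rule Min_le) (use r in auto)
  also have "hsum \<Delta>t r = hsum \<Delta>t i" using hsum_period[of \<Delta>t r "i div int N"] ir by simp
  also have "\<dots> \<le> C * measure lborel (S \<inter> {s0..s0+\<Delta>t})"
    using lower[OF t, of i] unfolding hsum_def s0_def .
  also have "\<dots> \<le> C * measure lborel (S \<inter> {s..s+\<Delta>t})" using sh C by simp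
  finally show ?thesis unfolding delta_st_def .
qed

end

theorem lemma4:
  fixes C p :: real and N :: nat and off len :: "nat \<Rightarrow> real"
  assumes "C > 0" and "p > 0" and "N \<ge> 1"
    and "0 \<le> off 0"
    and "\<And>k. Suc k < N \<Longrightarrow> off k < off (Suc k)"
    and "off (N - 1) < p"
    and "\<And>k. k < N \<Longrightarrow> len k \<ge> 0"
    and "\<And>k. Suc k < N \<Longrightarrow> off k + len k \<le> off (Suc k)"
    and "off (N - 1) + len (N - 1) \<le> off 0 + p"
  shows "\<forall>s \<Delta>t. \<Delta>t \<ge> 0 \<longrightarrow>
           C * delta_st p N off len s (s + \<Delta>t) \<ge> beta_st C p N off len \<Delta>t"
proof -
  interpret gcl C p N off len
    by (unfold_locales) (use assms in auto)
  show ?thesis using main by blast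
qed

end
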